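(* Let $\mathbb{K}$ be any field and $n$ a positive integer. Let $S$ be a linear subspace of $\mathrm{A}_n(\mathbb{K})$ such that $\dim S>3$ and every matrix of $S$ has rank at most $2$. Then $S$ is congruent to a subspace of $\mathrm{WA}_{n,1,1}(\mathbb{K})$.
   Context: $\mathrm{A}_n(\mathbb{K})$ is the space of $n\times n$ alternating matrices (skew-symmetric, zero diagonal). Subsets $\mathcal{V},\mathcal{W}$ of $\mathrm{M}_n(\mathbb{K})$ are congruent if $\mathcal{V}=P\mathcal{W}P^T$ for some $P\in\mathrm{GL}_n(\mathbb{K})$. $\mathrm{WA}_{n,1,1}(\mathbb{K})$ is the space of all $M=(m_{i,j})\in\mathrm{A}_n(\mathbb{K})$ with $m_{i,j}=0$ whenever $i>1$ and $j>1$ and $\max(i,j)>2$; equivalently the alternating matrices whose nonzero entries lie in the first row, the first column, or at positions $(1,2),(2,1)$ — i.e. all entries outside the first row and column vanish. *)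

theory Defs
  imports Jordan_Normal_Form.DL_Rank
begin

text \<open>Matrices are Jordan_Normal_Form matrices of dimension n x n; indices are 0-based,
so the paper's row/column 1 is index 0 and row/column 2 is index 1.\<close>

definition alt_mats :: "nat \<Rightarrow> 'a::field mat set" where
  "alt_mats n = {M \<in> carrier_mat n n. (\<forall>i<n. \<forall>j<n. M $$ (i,j) = - (M $$ (j,i))) \<and> (\<forall>i<n. M $$ (i,i) = 0)}"

definition WA_11 :: "nat \<Rightarrow> 'a::field mat set" where
  "WA_11 n = {M \<in> alt_mats n. \<forall>i<n. \<forall>j<n. i > 0 \<and> j > 0 \<and> max i j > 1 \<longrightarrow> M $$ (i,j) = 0}"

definition congruent_sets :: "nat \<Rightarrow> 'a::field mat set \<Rightarrow> 'a mat set \<Rightarrow> bool" where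
  "congruent_sets n V W \<longleftrightarrow> (\<exists>P \<in> carrier_mat n n. invertible_mat P \<and> V = (\<lambda>M. P * M * transpose_mat P) ` W)"

end

theory Submission
  imports Defs
begin


lemma dichot:
  fixes X Y :: "'b \<Rightarrow> nat \<Rightarrow> 'a::field"
  assumes Q: "\<And>N k l. N \<in> S \<Longrightarrow> k<n \<Longrightarrow> l<n \<Longrightarrow> X N k * Y N l = X N l * Y N k"
  and addS: "\<And>N N'. N\<in>S \<Longrightarrow> N'\<in>S \<Longrightarrow> f N N' \<in> S"
  and addX: "\<And>N N' k. N\<in>S \<Longrightarrow> N'\<in>S \<Longrightarrow> k<n \<Longrightarrow> X (f N N') k = X N k + X N' k"
  and addY: "\<And>N N' k. N\<in>S \<Longrightarrow> N'\<in>S \<Longrightarrow> k<n \<Longrightarrow> Y (f N N') k = Y N k + Y N' k"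
  and N0: "N0 \<in> S" "r < n" "X N0 r \<noteq> 0"
  shows "(\<forall>N\<in>S. \<forall>k<n. Y N0 r * X N k - X N0 r * Y N k = 0) \<or>
         (\<forall>N\<in>S. \<exists>\<alpha> \<beta>. \<forall>k<n. X N k = \<alpha> * X N0 k \<and> Y N k = \<beta> * X N0 k)"
proof (cases "\<forall>N\<in>S. \<forall>k<n. Y N0 r * X N k - X N0 r * Y N k = 0")
  case True thus ?thesis by blast
next
  case False
  define \<sigma> where "\<sigma> = X N0 r"
  define \<tau> where "\<tau> = Y N0 r"
  define y where "y = X N0"
  define lam where "lam N = (\<tau> * X N r - \<sigma> * Y N r) / \<sigma>" for N
  have s0: "\<sigma> \<noteq> 0" using N0 \<sigma>_def by simp
  from False obtain N1 r1 where N1: "N1 \<in> S" "r1 < n" "\<tau> * X N1 r1 - \<sigma> * Y N1 r1 \<noteq> 0"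
    unfolding \<sigma>_def \<tau>_def by auto
  have Y0: "Y N0 k = \<tau> * y k / \<sigma>" if "k < n" for k
  proof -
    have "X N0 k * Y N0 r = X N0 r * Y N0 k" using Q[OF N0(1) that N0(2)] .
    then show ?thesis using s0 unfolding \<sigma>_def \<tau>_def y_def by (simp add: field_simps)
  qed
  have F1: "\<tau> * X N k - \<sigma> * Y N k = lam N * y k" if N: "N \<in> S" and k: "k < n" for N k
  proof -
    have a: "X (f N N0) k * Y (f N N0) r = X (f N N0) r * Y (f N N0) k"
      using Q[OF addS[OF N N0(1)] k N0(2)] .
    have b: "X N k * Y N r = X N r * Y N k" using Q[OF N k N0(2)] .
    have c: "X N0 k * Y N0 r = X N0 r * Y N0 k" using Q[OF N0(1) k N0(2)] .
    from a have "(X N k + X N0 k) * (Y N r + Y N0 r) = (X N r + X N0 r) * (Y N k + Y N0 k)"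
      using addX[OF N N0(1) k] addX[OF N N0(1) N0(2)] addY[OF N N0(1) k] addY[OF N N0(1) N0(2)] by simp
    with b c have d: "X N k * Y N0 r + X N0 k * Y N r = X N r * Y N0 k + X N0 r * Y N k"
      by (simp add: algebra_simps)
    show ?thesis using d Y0[OF k] s0 unfolding lam_def \<sigma>_def \<tau>_def y_def
      by (simp add: field_simps)
  qed
  have yr: "y r = \<sigma>" unfolding y_def \<sigma>_def ..
  have F3: "X N k = (X N r / \<sigma>) * y k" if N: "N \<in> S" and l: "lam N \<noteq> 0" and k: "k < n" for N k
  proof -
    have a: "X N k * Y N r = X N r * Y N k" using Q[OF N k N0(2)] .
    have b: "\<sigma> * Y N k = \<tau> * X N k - lam N * y k" using F1[OF N k] by (simp add: algebra_simps)
    have c: "\<sigma> * Y N r = \<tau> * X N r - lam N * \<sigma>" using F1[OF N N0(2)] yr by (simp add: algebra_simps)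
    have "\<sigma> * (X N k * Y N r) = \<sigma> * (X N r * Y N k)" using a by simp
    hence "X N k * (\<sigma> * Y N r) = X N r * (\<sigma> * Y N k)" by (simp add: algebra_simps)
    hence "X N k * (\<tau> * X N r - lam N * \<sigma>) = X N r * (\<tau> * X N k - lam N * y k)" using b c by simp
    hence "lam N * (\<sigma> * X N k) = lam N * (X N r * y k)" by (simp add: algebra_simps) (metis mult.commute)
    hence "\<sigma> * X N k = X N r * y k" using l by simp
    thus ?thesis using s0 by (simp add: field_simps)
  qed
  have l1: "lam N1 \<noteq> 0"
    using F1[OF N1(1) N1(2)] N1(3) by auto
  have lamadd: "lam (f N N1) = lam N + lam N1" if "N \<in> S" for N
    unfolding lam_def using addX[OF that N1(1) N0(2)] addY[OF that N1(1) N0(2)] s0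
    by (simp add: field_simps)
  have "\<forall>N\<in>S. \<exists>\<alpha> \<beta>. \<forall>k<n. X N k = \<alpha> * X N0 k \<and> Y N k = \<beta> * X N0 k"
  proof
    fix N assume N: "N \<in> S"
    obtain \<alpha> where al: "\<forall>k<n. X N k = \<alpha> * y k"
    proof (cases "lam N = 0")
      case False thus ?thesis using F3[OF N False] that by blast
    next
      case True
      have "lam (f N N1) \<noteq> 0" using lamadd[OF N] True l1 by simp
      hence "\<forall>k<n. X N k = (X (f N N1) r / \<sigma> - X N1 r / \<sigma>) * y k"
        using F3[OF addS[OF N N1(1)]] F3[OF N1(1) l1] addX[OF N N1(1)]
        by (simp add: algebra_simps)
      thus ?thesis using that by blast
    qed
    have "\<forall>k<n. Y N k = ((\<tau> * \<alpha> - lam N) / \<sigma>) * y k"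
    proof (intro allI impI)
      fix k assume k: "k < n"
      have "\<sigma> * Y N k = \<tau> * X N k - lam N * y k" using F1[OF N k] by (simp add: algebra_simps)
      thus "Y N k = ((\<tau> * \<alpha> - lam N) / \<sigma>) * y k" using al k s0 by (simp add: field_simps)
    qed
    thus "\<exists>\<alpha> \<beta>. \<forall>k<n. X N k = \<alpha> * X N0 k \<and> Y N k = \<beta> * X N0 k"
      using al unfolding y_def by blast
  qed
  thus ?thesis by blast
qed


lemma R_alg:
  fixes mpq nkl npq mkl mpk nql npk mql mpl nqk npl mqk :: "'a::field"
  assumes h1: "mpq*nkl + npq*mkl - mpk*nql - npk*mql + mpl*nqk + npl*mqk = 0"
    and h2: "mpq*mkl - mpk*mql + mpl*mqk = 0" and h3: "mpq = 1"
  shows "nkl = mpk * (nql - npq * mql) - mpl * (nqk - npq*mqk) + (npk - npq*mpk) * mql - (npl - npq*mpl) * mqk + npq * mkl"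
proof -
  have "nkl - (mpk * (nql - npq * mql) - mpl * (nqk - npq*mqk) + (npk - npq*mpk) * mql - (npl - npq*mpl) * mqk + npq * mkl)
    = (mpq*nkl + npq*mkl - mpk*nql - npk*mql + mpl*nqk + npl*mqk) - 2 * npq * (mpq*mkl - mpk*mql + mpl*mqk)"
    using h3 by (simp add: algebra_simps)
  thus ?thesis using h1 h2 by simp
qed
lemma Q_alg:
  fixes mpq nkl npq mkl mpk nql npk mql mpl nqk npl mqk :: "'a::field"
  assumes h1: "mpq*nkl + npq*mkl - mpk*nql - npk*mql + mpl*nqk + npl*mqk = 0"
    and h2: "mpq*mkl - mpk*mql + mpl*mqk = 0" and h3: "mpq = 1" and h4: "npq*nkl - npk*nql + npl*nqk = 0"
  shows "(npk - npq*mpk) * (nql - npq*mql) = (npl - npq*mpl) * (nqk - npq*mqk)"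
proof -
  have "(npk - npq*mpk) * (nql - npq*mql) - (npl - npq*mpl) * (nqk - npq*mqk)
     = - (npq*nkl - npk*nql + npl*nqk) + npq * (mpq*nkl + npq*mkl - mpk*nql - npk*mql + mpl*nqk + npl*mqk)
       - npq * npq * (mpq*mkl - mpk*mql + mpl*mqk)"
    using h3 by (simp add: algebra_simps)
  thus ?thesis using h1 h2 h4 by simp
qed
lemma caseA1:
  fixes s t Xk Xl Yk Yl apk apl bqk bql c mkl :: "'a::field"
  assumes "t \<noteq> 0" and e1: "s*Xk + t*Yk = 0" and e2: "s*Xl + t*Yl = 0" and e3: "mkl = apk*bql - apl*bqk"
  shows "apk*Yl - apl*Yk + Xk*bql - Xl*bqk + c*mkl
     = (s*apk + t*bqk)*(-(Xl + c*apl)/t) - (s*apl+t*bql)*(-(Xk + c*apk)/t)"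
proof -
  have "t * (apk*Yl - apl*Yk + Xk*bql - Xl*bqk + c*mkl)
     - ((s*apk + t*bqk)*(-(Xl + c*apl)) - (s*apl+t*bql)*(-(Xk + c*apk)))
     = apk*(s*Xl + t*Yl) - apl*(s*Xk + t*Yk) + t*c*(mkl - (apk*bql - apl*bqk))"
    by (simp add: algebra_simps)
  hence e: "t * (apk*Yl - apl*Yk + Xk*bql - Xl*bqk + c*mkl)
     = (s*apk + t*bqk)*(-(Xl + c*apl)) - (s*apl+t*bql)*(-(Xk + c*apk))"
    using e1 e2 e3 by simp
  have "apk*Yl - apl*Yk + Xk*bql - Xl*bqk + c*mkl = ((s*apk + t*bqk)*(-(Xl + c*apl)) - (s*apl+t*bql)*(-(Xk + c*apk))) / t"
    using e assms(1) by (simp add: eq_divide_eq mult.commute)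
  also have "\<dots> = (s*apk + t*bqk)*(-(Xl + c*apl)/t) - (s*apl+t*bql)*(-(Xk + c*apk)/t)"
    by (simp only: times_divide_eq_right diff_divide_distrib)
  finally show ?thesis .
qed
lemma caseA2:
  fixes s Xk Xl Yk Yl apk apl bqk bql c mkl :: "'a::field"
  assumes "s \<noteq> 0" and e1: "Xk = 0" and e2: "Xl = 0" and e3: "mkl = apk*bql - apl*bqk"
  shows "apk*Yl - apl*Yk + Xk*bql - Xl*bqk + c*mkl
     = (s*apk + 0*bqk)*((Yl + c*bql)/s) - (s*apl+0*bql)*((Yk + c*bqk)/s)"
proof -
  have "s * (apk*Yl - apl*Yk + Xk*bql - Xl*bqk + c*mkl)
     - ((s*apk + 0*bqk)*(Yl + c*bql) - (s*apl+0*bql)*(Yk + c*bqk))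
     = s*bql*Xk - s*bqk*Xl + s*c*(mkl - (apk*bql - apl*bqk))"
    by (simp add: algebra_simps)
  hence e: "s * (apk*Yl - apl*Yk + Xk*bql - Xl*bqk + c*mkl)
     = (s*apk + 0*bqk)*(Yl + c*bql) - (s*apl+0*bql)*(Yk + c*bqk)"
    using e1 e2 e3 by simp
  have "apk*Yl - apl*Yk + Xk*bql - Xl*bqk + c*mkl = ((s*apk + 0*bqk)*(Yl + c*bql) - (s*apl+0*bql)*(Yk + c*bqk)) / s"
    using e assms(1) by (simp add: eq_divide_eq mult.commute)
  also have "\<dots> = (s*apk + 0*bqk)*((Yl + c*bql)/s) - (s*apl+0*bql)*((Yk + c*bqk)/s)"
    by (simp only: times_divide_eq_right diff_divide_distrib)
  finally show ?thesis .
qed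
lemma polar_alg:
  fixes aij akl aik ajl ail ajk bij bkl bik bjl bil bjk :: "'a::field"
  assumes h1: "(aij + bij)*(akl + bkl) - (aik + bik)*(ajl + bjl) + (ail + bil)*(ajk + bjk) = 0"
   and h2: "aij*akl - aik*ajl + ail*ajk = 0" and h3: "bij*bkl - bik*bjl + bil*bjk = 0"
  shows "aij*bkl + bij*akl - aik*bjl - bik*ajl + ail*bjk + bil*ajk = 0"
proof -
  have "aij*bkl + bij*akl - aik*bjl - bik*ajl + ail*bjk + bil*ajk =
    ((aij + bij)*(akl + bkl) - (aik + bik)*(ajl + bjl) + (ail + bil)*(ajk + bjk))
    - (aij*akl - aik*ajl + ail*ajk) - (bij*bkl - bik*bjl + bil*bjk)"
    by (simp add: algebra_simps)
  thus ?thesis using h1 h2 h3 by simp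
qed

lemma alg_main:
  fixes S :: "'a::field mat set"
  assumes n: "n > 0"
  and carr: "S \<subseteq> carrier_mat n n"
  and addc: "\<And>A B. A\<in>S \<Longrightarrow> B\<in>S \<Longrightarrow> A + B \<in> S"
  and smul: "\<And>A c. A\<in>S \<Longrightarrow> c \<cdot>\<^sub>m A \<in> S"
  and skew: "\<And>A i j. A\<in>S \<Longrightarrow> i<n \<Longrightarrow> j<n \<Longrightarrow> A$$(i,j) = - A$$(j,i)"
  and diag: "\<And>A i. A\<in>S \<Longrightarrow> i<n \<Longrightarrow> A$$(i,i) = 0"
  and pl: "\<And>A i j k l. A\<in>S \<Longrightarrow> i<n \<Longrightarrow> j<n \<Longrightarrow> k<n \<Longrightarrow> l<n \<Longrightarrow>
     A$$(i,j)*A$$(k,l) - A$$(i,k)*A$$(j,l) + A$$(i,l)*A$$(j,k) = 0"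
  shows "(\<exists>u. (\<exists>r<n. u r \<noteq> 0) \<and> (\<forall>N\<in>S. \<exists>v. \<forall>k<n. \<forall>l<n. N$$(k,l) = u k * v l - u l * v k))
     \<or> (\<exists>A1 A2 A3. A1 \<in> carrier_mat n n \<and> A2 \<in> carrier_mat n n \<and> A3 \<in> carrier_mat n n \<and>
          (\<forall>N\<in>S. \<exists>x y z. N = x \<cdot>\<^sub>m A1 + y \<cdot>\<^sub>m A2 + z \<cdot>\<^sub>m A3))"
proof (cases "\<forall>N\<in>S. \<forall>k<n. \<forall>l<n. N$$(k,l) = 0")
  case True
  have "\<forall>N\<in>S. \<exists>v. \<forall>k<n. \<forall>l<n. N$$(k,l) = (\<lambda>_. 1) k * v l - (\<lambda>_. 1) l * v k"
    using True by (intro ballI exI[of _ "\<lambda>_. 0"]) simp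
  moreover have "\<exists>r<n. (\<lambda>_. (1::'a)) r \<noteq> 0" using n by auto
  ultimately show ?thesis by (intro disjI1 exI[of _ "\<lambda>_. (1::'a)"] conjI)
next
  case False
  then obtain M0 p q where M0: "M0 \<in> S" "p < n" "q < n" "M0$$(p,q) \<noteq> 0" by blast
  define M where "M = (1 / M0$$(p,q)) \<cdot>\<^sub>m M0"
  have MS: "M \<in> S" unfolding M_def using smul M0(1) .
  have ia: "(A+B)$$(i,j) = A$$(i,j) + B$$(i,j)" if "A\<in>S" "B\<in>S" "i<n" "j<n" for A B i j
    using that carr by auto
  have ism: "(c \<cdot>\<^sub>m A)$$(i,j) = c * A$$(i,j)" if "A\<in>S" "i<n" "j<n" for A c i j
    using that carr by auto
  have mpq: "M$$(p,q) = 1" unfolding M_def using ism[OF M0(1) M0(2,3)] M0(4) by simp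
  have polar: "A$$(i,j)*B$$(k,l) + B$$(i,j)*A$$(k,l) - A$$(i,k)*B$$(j,l) - B$$(i,k)*A$$(j,l)
      + A$$(i,l)*B$$(j,k) + B$$(i,l)*A$$(j,k) = 0"
    if "A\<in>S" "B\<in>S" "i<n" "j<n" "k<n" "l<n" for A B i j k l
  proof -
    have h1: "(A+B)$$(i,j)*(A+B)$$(k,l) - (A+B)$$(i,k)*(A+B)$$(j,l) + (A+B)$$(i,l)*(A+B)$$(j,k) = 0"
      using pl[OF addc[OF that(1,2)] that(3-6)] .
    have h2: "A$$(i,j)*A$$(k,l) - A$$(i,k)*A$$(j,l) + A$$(i,l)*A$$(j,k) = 0" using pl[OF that(1) that(3-6)] .
    have h3: "B$$(i,j)*B$$(k,l) - B$$(i,k)*B$$(j,l) + B$$(i,l)*B$$(j,k) = 0" using pl[OF that(2) that(3-6)] .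
    from h1 have h1': "(A$$(i,j) + B$$(i,j))*(A$$(k,l) + B$$(k,l)) - (A$$(i,k) + B$$(i,k))*(A$$(j,l) + B$$(j,l))
        + (A$$(i,l) + B$$(i,l))*(A$$(j,k) + B$$(j,k)) = 0"
      using that by (simp add: ia)
    show ?thesis using polar_alg[OF h1' h2 h3] .
  qed
  define m where "m k l = M$$(k,l)" for k l
  define c where "c N = N$$(p,q)" for N :: "'a mat"
  define X where "X N k = N$$(p,k) - c N * m p k" for N k
  define Y where "Y N k = N$$(q,k) - c N * m q k" for N k
  have R: "N$$(k,l) = m p k * Y N l - m p l * Y N k + X N k * m q l - X N l * m q k + c N * m k l"
    if N: "N \<in> S" and kl: "k<n" "l<n" for N k l
  proof -
    have h1: "M$$(p,q)*N$$(k,l) + N$$(p,q)*M$$(k,l) - M$$(p,k)*N$$(q,l) - N$$(p,k)*M$$(q,l)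
      + M$$(p,l)*N$$(q,k) + N$$(p,l)*M$$(q,k) = 0" using polar[OF MS N M0(2,3) kl] .
    have h2: "M$$(p,q)*M$$(k,l) - M$$(p,k)*M$$(q,l) + M$$(p,l)*M$$(q,k) = 0" using pl[OF MS M0(2,3) kl] .
    show ?thesis unfolding X_def Y_def c_def m_def by (rule R_alg[OF h1 h2 mpq])
  qed
  have Q: "X N k * Y N l = X N l * Y N k" if N: "N \<in> S" and kl: "k<n" "l<n" for N k l
  proof -
    have h1: "M$$(p,q)*N$$(k,l) + N$$(p,q)*M$$(k,l) - M$$(p,k)*N$$(q,l) - N$$(p,k)*M$$(q,l)
      + M$$(p,l)*N$$(q,k) + N$$(p,l)*M$$(q,k) = 0" using polar[OF MS N M0(2,3) kl] .
    have h2: "M$$(p,q)*M$$(k,l) - M$$(p,k)*M$$(q,l) + M$$(p,l)*M$$(q,k) = 0" using pl[OF MS M0(2,3) kl] .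
    have h3: "N$$(p,q)*N$$(k,l) - N$$(p,k)*N$$(q,l) + N$$(p,l)*N$$(q,k) = 0" using pl[OF N M0(2,3) kl] .
    show ?thesis unfolding X_def Y_def c_def m_def by (rule Q_alg[OF h1 h2 mpq h3])
  qed
  have addX: "X (A + B) k = X A k + X B k" if "A\<in>S" "B\<in>S" "k<n" for A B k
    unfolding X_def c_def using ia[OF that(1,2) M0(2) that(3)] ia[OF that(1,2) M0(2,3)]
    by (simp add: algebra_simps)
  have addY: "Y (A + B) k = Y A k + Y B k" if "A\<in>S" "B\<in>S" "k<n" for A B k
    unfolding Y_def c_def using ia[OF that(1,2) M0(3) that(3)] ia[OF that(1,2) M0(2,3)]
    by (simp add: algebra_simps)
  have cases: "(\<exists>s t. (s \<noteq> 0 \<or> t \<noteq> 0) \<and> (\<forall>N\<in>S. \<forall>k<n. s * X N k + t * Y N k = 0)) \<or>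
     (\<exists>y. \<forall>N\<in>S. \<exists>\<alpha> \<beta>. \<forall>k<n. X N k = \<alpha> * y k \<and> Y N k = \<beta> * y k)"
  proof (cases "\<forall>N\<in>S. \<forall>k<n. X N k = 0 \<and> Y N k = 0")
    case True
    then have "\<forall>N\<in>S. \<forall>k<n. 1 * X N k + 0 * Y N k = 0" by simp
    then show ?thesis by (intro disjI1 exI[of _ 1] exI[of _ 0]) simp
  next
    case False
    then obtain N0 r where N0: "N0 \<in> S" "r < n" "X N0 r \<noteq> 0 \<or> Y N0 r \<noteq> 0" by blast
    show ?thesis
    proof (cases "X N0 r \<noteq> 0")
      case True
      from dichot[of S n X Y "(+)", OF Q addc addX addY N0(1,2) True]
      show ?thesis
      proof
        assume "\<forall>N\<in>S. \<forall>k<n. Y N0 r * X N k - X N0 r * Y N k = 0"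
        hence "\<forall>N\<in>S. \<forall>k<n. Y N0 r * X N k + (- X N0 r) * Y N k = 0" by simp
        thus ?thesis using True by (intro disjI1 exI[of _ "Y N0 r"] exI[of _ "- X N0 r"]) simp
      next
        assume "\<forall>N\<in>S. \<exists>\<alpha> \<beta>. \<forall>k<n. X N k = \<alpha> * X N0 k \<and> Y N k = \<beta> * X N0 k"
        thus ?thesis by blast
      qed
    next
      case False
      hence Y0: "Y N0 r \<noteq> 0" using N0(3) by simp
      have Q': "Y N k * X N l = Y N l * X N k" if "N \<in> S" "k<n" "l<n" for N k l
        using Q[OF that] by (simp add: mult.commute)
      from dichot[of S n Y X "(+)", OF Q' addc addY addX N0(1,2) Y0]
      show ?thesis
      proof
        assume "\<forall>N\<in>S. \<forall>k<n. X N0 r * Y N k - Y N0 r * X N k = 0"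
        hence "\<forall>N\<in>S. \<forall>k<n. (- Y N0 r) * X N k + X N0 r * Y N k = 0" by (simp add: algebra_simps)
        thus ?thesis using Y0 by (intro disjI1 exI[of _ "- Y N0 r"] exI[of _ "X N0 r"]) simp
      next
        assume "\<forall>N\<in>S. \<exists>\<alpha> \<beta>. \<forall>k<n. Y N k = \<alpha> * Y N0 k \<and> X N k = \<beta> * Y N0 k"
        thus ?thesis by (intro disjI2 exI[of _ "Y N0 r"]) blast
      qed
    qed
  qed
  have mpp: "m p p = 0" unfolding m_def using diag[OF MS M0(2)] .
  have mqq: "m q q = 0" unfolding m_def using diag[OF MS M0(3)] .
  have mqp: "m q p = -1" unfolding m_def using skew[OF MS M0(3,2)] mpq by simp
  have mkl: "m k l = m p k * m q l - m p l * m q k" if "k<n" "l<n" for k l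
  proof -
    have "M$$(p,q)*M$$(k,l) - M$$(p,k)*M$$(q,l) + M$$(p,l)*M$$(q,k) = 0" using pl[OF MS M0(2,3) that] .
    thus ?thesis using mpq unfolding m_def by (simp add: algebra_simps)
  qed
  from cases show ?thesis
  proof
    assume "\<exists>s t. (s \<noteq> 0 \<or> t \<noteq> 0) \<and> (\<forall>N\<in>S. \<forall>k<n. s * X N k + t * Y N k = 0)"
    then obtain s t where st: "s \<noteq> 0 \<or> t \<noteq> 0" "\<forall>N\<in>S. \<forall>k<n. s * X N k + t * Y N k = 0" by blast
    define u where "u k = s * m p k + t * m q k" for k
    have "u p = - t" "u q = s" unfolding u_def using mpp mqq mqp mpq unfolding m_def by simp_all
    hence ur: "\<exists>r<n. u r \<noteq> 0" using st(1) M0(2,3) by (cases "t = 0") auto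
    have "\<forall>N\<in>S. \<exists>v. \<forall>k<n. \<forall>l<n. N$$(k,l) = u k * v l - u l * v k"
    proof
      fix N assume N: "N \<in> S"
      show "\<exists>v. \<forall>k<n. \<forall>l<n. N$$(k,l) = u k * v l - u l * v k"
      proof (cases "t = 0")
        case False
        show ?thesis
        proof (intro exI[of _ "\<lambda>l. - (X N l + c N * m p l) / t"] allI impI)
          fix k l assume kl: "k < n" "l < n"
          have e1: "s * X N k + t * Y N k = 0" "s * X N l + t * Y N l = 0" using st(2) N kl by auto
          show "N$$(k,l) = u k * (- (X N l + c N * m p l) / t) - u l * (- (X N k + c N * m p k) / t)"
            unfolding R[OF N kl] u_def by (rule caseA1[OF False e1 mkl[OF kl]])
        qed
      next
        case True
        hence s0: "s \<noteq> 0" using st(1) by simp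
        show ?thesis
        proof (intro exI[of _ "\<lambda>l. (Y N l + c N * m q l) / s"] allI impI)
          fix k l assume kl: "k < n" "l < n"
          have e1: "s * X N k = 0" "s * X N l = 0" using st(2) N kl True by auto
          have e2: "X N k = 0" "X N l = 0" using e1 s0 by simp_all
          show "N$$(k,l) = u k * ((Y N l + c N * m q l) / s) - u l * ((Y N k + c N * m q k) / s)"
            unfolding R[OF N kl] u_def True by (rule caseA2[OF s0 e2 mkl[OF kl]])
        qed
      qed
    qed
    thus ?thesis using ur by blast
  next
    assume "\<exists>y. \<forall>N\<in>S. \<exists>\<alpha> \<beta>. \<forall>k<n. X N k = \<alpha> * y k \<and> Y N k = \<beta> * y k"
    then obtain y where y: "\<forall>N\<in>S. \<exists>\<alpha> \<beta>. \<forall>k<n. X N k = \<alpha> * y k \<and> Y N k = \<beta> * y k" by blast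
    define A1 where "A1 = mat n n (\<lambda>(k,l). m p k * y l - m p l * y k)"
    define A2 where "A2 = mat n n (\<lambda>(k,l). y k * m q l - y l * m q k)"
    have "\<forall>N\<in>S. \<exists>x z w. N = x \<cdot>\<^sub>m A1 + z \<cdot>\<^sub>m A2 + w \<cdot>\<^sub>m M"
    proof
      fix N assume N: "N \<in> S"
      then obtain \<alpha> \<beta> where ab: "\<forall>k<n. X N k = \<alpha> * y k \<and> Y N k = \<beta> * y k" using y by blast
      have "N = \<beta> \<cdot>\<^sub>m A1 + \<alpha> \<cdot>\<^sub>m A2 + c N \<cdot>\<^sub>m M"
      proof (rule eq_matI)
        fix k l assume "k < dim_row (\<beta> \<cdot>\<^sub>m A1 + \<alpha> \<cdot>\<^sub>m A2 + c N \<cdot>\<^sub>m M)" "l < dim_col (\<beta> \<cdot>\<^sub>m A1 + \<alpha> \<cdot>\<^sub>m A2 + c N \<cdot>\<^sub>m M)"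
        hence kl: "k < n" "l < n" using MS carr unfolding A1_def by auto
        have "M \<in> carrier_mat n n" using MS carr by auto
        then show "N $$ (k, l) = (\<beta> \<cdot>\<^sub>m A1 + \<alpha> \<cdot>\<^sub>m A2 + c N \<cdot>\<^sub>m M) $$ (k, l)"
          unfolding R[OF N kl] using kl ab unfolding A1_def A2_def m_def
          by (simp add: algebra_simps)
      next
        show "dim_row N = dim_row (\<beta> \<cdot>\<^sub>m A1 + \<alpha> \<cdot>\<^sub>m A2 + c N \<cdot>\<^sub>m M)" using N MS carr unfolding A1_def by auto
        show "dim_col N = dim_col (\<beta> \<cdot>\<^sub>m A1 + \<alpha> \<cdot>\<^sub>m A2 + c N \<cdot>\<^sub>m M)" using N MS carr unfolding A1_def by auto
      qed
      thus "\<exists>x z w. N = x \<cdot>\<^sub>m A1 + z \<cdot>\<^sub>m A2 + w \<cdot>\<^sub>m M" by blast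
    qed
    moreover have "A1 \<in> carrier_mat n n" "A2 \<in> carrier_mat n n" "M \<in> carrier_mat n n"
      unfolding A1_def A2_def using MS carr by auto
    ultimately show ?thesis by blast
  qed
qed


lemma sum3: "(\<Sum>t\<in>{0..<3::nat}. f t) = f 0 + f 1 + f 2"
  by (simp add: eval_nat_numeral atLeast0LessThan lessThan_Suc ac_simps)

lemma rank2_dep:
  fixes M :: "'a::field mat"
  assumes M: "M \<in> carrier_mat n n" and rk: "vec_space.rank n M \<le> 2"
    and ijk: "i<n" "j<n" "k<n"
  shows "\<exists>x y z. (x \<noteq> 0 \<or> y \<noteq> 0 \<or> z \<noteq> 0) \<and> (\<forall>r<n. x * M$$(r,i) + y * M$$(r,j) + z * M$$(r,k) = 0)"
proof -
  interpret V: vec_space "TYPE('a)" n .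
  have ce: "M$$(r,a) = M$$(r,b)" if "col M a = col M b" "r < n" "a < n" "b < n" for a b r
  proof -
    have "M$$(r,a) = col M a $ r" using that(2-4) M by simp
    also have "\<dots> = col M b $ r" using that(1) by simp
    also have "\<dots> = M$$(r,b)" using that(2-4) M by simp
    finally show ?thesis .
  qed
  show ?thesis
  proof (cases "distinct [col M i, col M j, col M k]")
    case False
    hence "col M i = col M j \<or> col M i = col M k \<or> col M j = col M k" by auto
    thus ?thesis
    proof (elim disjE)
      assume h: "col M i = col M j"
      show ?thesis by (rule exI[of _ 1], rule exI[of _ "-1"], rule exI[of _ 0]) (use ce[OF h] ijk in auto)
    next
      assume h: "col M i = col M k"
      show ?thesis by (rule exI[of _ 1], rule exI[of _ 0], rule exI[of _ "-1"]) (use ce[OF h] ijk in auto)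
    next
      assume h: "col M j = col M k"
      show ?thesis by (rule exI[of _ 0], rule exI[of _ 1], rule exI[of _ "-1"]) (use ce[OF h] ijk in auto)
    qed
  next
    case True
    define C where "C = mat n 3 (\<lambda>(r,s). M$$(r, [i,j,k]!s))"
    have Cc: "C \<in> carrier_mat n 3" unfolding C_def by simp
    have colC: "col C s = col M ([i,j,k]!s)" if "s < 3" for s
    proof (rule eq_vecI)
      show "dim_vec (col C s) = dim_vec (col M ([i,j,k]!s))" using M unfolding C_def by simp
      fix r assume "r < dim_vec (col M ([i, j, k] ! s))"
      hence r: "r < n" using M by simp
      have "[i,j,k]!s < n" using that ijk by (cases s; cases "s - 1"; auto)
      thus "col C s $ r = col M ([i, j, k] ! s) $ r" using r that M unfolding C_def by simp
    qed
    have cols: "cols C = [col M i, col M j, col M k]"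
    proof (rule nth_equalityI)
      show "length (cols C) = length [col M i, col M j, col M k]" using Cc by simp
      fix s assume "s < length (cols C)"
      hence s: "s < 3" using Cc by simp
      have "cols C ! s = col M ([i,j,k]!s)" using colC[OF s] s Cc by simp
      thus "cols C ! s = [col M i, col M j, col M k] ! s" using s by (cases s; cases "s - 1"; auto)
    qed
    have dist: "distinct (cols C)" using True cols by simp
    have sub: "set (cols C) \<subseteq> set (cols M)"
    proof -
      have "col M a \<in> set (cols M)" if "a < n" for a
        using that M by (metis carrier_matD(2) cols_length cols_nth nth_mem)
      thus ?thesis using cols ijk by auto
    qed
    have dep: "V.lin_dep (set (cols C))"
    proof (rule ccontr)
      assume "\<not> V.lin_dep (set (cols C))"
      hence "card (set (cols C)) \<le> V.rank M" using V.rank_ge_card_indpt[OF M sub] by blast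
      moreover have "card (set (cols C)) = 3" using distinct_card[OF dist] Cc by simp
      ultimately show False using rk by simp
    qed
    obtain v where v: "v \<in> carrier_vec 3" "v \<noteq> 0\<^sub>v 3" "C *\<^sub>v v = 0\<^sub>v n"
      using V.lin_depE[OF Cc dep dist] by blast
    have nz: "v$0 \<noteq> 0 \<or> v$1 \<noteq> 0 \<or> v$2 \<noteq> 0"
    proof (rule ccontr)
      assume "\<not> ?thesis"
      hence "v = 0\<^sub>v 3"
        using v(1) by (intro eq_vecI) (auto simp: less_Suc_eq numeral_3_eq_3 numeral_2_eq_2)
      thus False using v(2) by simp
    qed
    have "\<forall>r<n. v$0 * M$$(r,i) + v$1 * M$$(r,j) + v$2 * M$$(r,k) = 0"
    proof (intro allI impI)
      fix r assume r: "r < n"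
      have "(C *\<^sub>v v) $ r = 0" using v(3) r by simp
      hence "row C r \<bullet> v = 0" using r Cc by simp
      hence "(\<Sum>t\<in>{0..<3}. C$$(r,t) * v$t) = 0" using v(1) r Cc by (simp add: scalar_prod_def)
      thus "v$0 * M$$(r,i) + v$1 * M$$(r,j) + v$2 * M$$(r,k) = 0"
        unfolding sum3 using r unfolding C_def by (simp add: mult.commute)
    qed
    thus ?thesis using nz by blast
  qed
qed

lemma rank2_plucker:
  fixes M :: "'a::field mat"
  assumes M: "M \<in> carrier_mat n n" and rk: "vec_space.rank n M \<le> 2"
    and skew: "\<And>a b. a<n \<Longrightarrow> b<n \<Longrightarrow> M$$(a,b) = - M$$(b,a)"
    and diag: "\<And>a. a<n \<Longrightarrow> M$$(a,a) = 0"
    and ijkl: "i<n" "j<n" "k<n" "l<n"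
  shows "M$$(i,j)*M$$(k,l) - M$$(i,k)*M$$(j,l) + M$$(i,l)*M$$(j,k) = 0"
proof -
  obtain x y z where xyz: "x \<noteq> 0 \<or> y \<noteq> 0 \<or> z \<noteq> 0"
    and R: "\<forall>r<n. x * M$$(r,j) + y * M$$(r,k) + z * M$$(r,l) = 0"
    using rank2_dep[OF M rk ijkl(2-4)] by blast
  define mij where "mij = M$$(i,j)"
  define mik where "mik = M$$(i,k)"
  define mil where "mil = M$$(i,l)"
  define mjk where "mjk = M$$(j,k)"
  define mjl where "mjl = M$$(j,l)"
  define mkl where "mkl = M$$(k,l)"
  have Ri: "x*mij + y*mik + z*mil = 0" using R ijkl unfolding mij_def mik_def mil_def by auto
  have Rj: "y*mjk + z*mjl = 0" using R ijkl diag[OF ijkl(2)] unfolding mjk_def mjl_def by force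
  have Rk: "-x*mjk + z*mkl = 0" using spec[OF R, of k] ijkl diag[OF ijkl(3)] skew[OF ijkl(3) ijkl(2)]
    unfolding mjk_def mkl_def by simp
  have Rl: "-x*mjl - y*mkl = 0" using spec[OF R, of l] ijkl diag[OF ijkl(4)] skew[OF ijkl(4) ijkl(2)] skew[OF ijkl(4) ijkl(3)]
    unfolding mjl_def mkl_def by (simp add: algebra_simps)
  define P where "P = mij*mkl - mik*mjl + mil*mjk"
  have "x*P = mkl*(x*mij + y*mik + z*mil) + mik*(-x*mjl - y*mkl) - mil*(-x*mjk + z*mkl)"
    unfolding P_def by (simp add: algebra_simps)
  hence xP: "x*P = 0" using Ri Rk Rl by simp
  have "y*P = -mjl*(x*mij + y*mik + z*mil) - mij*(-x*mjl - y*mkl) + mil*(y*mjk + z*mjl)"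
    unfolding P_def by (simp add: algebra_simps)
  hence yP: "y*P = 0" using Ri Rj Rl by simp
  have "z*P = mjk*(x*mij + y*mik + z*mil) + mij*(-x*mjk + z*mkl) - mik*(y*mjk + z*mjl)"
    unfolding P_def by (simp add: algebra_simps)
  hence zP: "z*P = 0" using Ri Rj Rk by simp
  have "P = 0" using xyz xP yP zP by auto
  thus ?thesis unfolding P_def mij_def mik_def mil_def mjk_def mjl_def mkl_def .
qed


lemma (in vectorspace) fin_dim_subspace':
  assumes sub: "subspace K X V" and fd: "fin_dim"
  shows "vectorspace.fin_dim K (vs X)"
proof -
  interpret X: vectorspace K "vs X" using subspace_is_vs[OF sub] .
  have subm: "submodule K X V" using sub by (simp add: subspace_def)
  have XV: "X \<subseteq> carrier V" using subm by (simp add: submodule_def)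
  have li_eq: "X.lin_dep B = lin_dep B" if "B \<subseteq> X" for B
    using span_li_not_depend(2)[OF that subm] .
  define P where "P B = (B \<subseteq> X \<and> lin_indpt B)" for B
  have bnd: "finite B \<and> card B \<le> dim" if "P B" for B
    using li_le_dim[OF fd] that XV unfolding P_def by blast
  have P0: "P {}" unfolding P_def lin_dep_def by auto
  obtain B where B: "finite B" "maximal B P" using maximal_exists[of P dim "{}"] bnd P0 by blast
  have "maximal B (\<lambda>S. S \<subseteq> carrier (vs X) \<and> X.lin_indpt S)"
    using B(2) li_eq unfolding maximal_def P_def by auto
  hence "X.gen_set B" by (rule X.max_li_is_gen)
  moreover have "B \<subseteq> carrier (vs X)" using B(2) unfolding maximal_def P_def by auto
  ultimately show ?thesis unfolding X.fin_dim_def using B(1) by blast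
qed

lemma dim_le3:
  fixes S :: "'a::field mat set"
  assumes sub: "subspace class_ring S (module_mat TYPE('a) n n)"
  and A: "A1 \<in> carrier_mat n n" "A2 \<in> carrier_mat n n" "A3 \<in> carrier_mat n n"
  and rep: "\<forall>N\<in>S. \<exists>x y z. N = x \<cdot>\<^sub>m A1 + y \<cdot>\<^sub>m A2 + z \<cdot>\<^sub>m A3"
  shows "vectorspace.dim class_ring ((module_mat TYPE('a) n n)\<lparr>carrier := S\<rparr>) \<le> 3"
proof -
  let ?V = "module_mat TYPE('a) n n"
  interpret VS: vectorspace class_ring ?V by (rule matrix_vs)
  define G where "G = {A1,A2,A3}"
  have GV: "G \<subseteq> carrier ?V" using A unfolding G_def by (simp add: module_mat_simps)
  define T where "T = VS.span G"
  have subT: "subspace class_ring T ?V" unfolding T_def by (rule VS.span_is_subspace[OF GV])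
  have submT: "submodule class_ring T ?V" using subT by (simp add: subspace_def)
  interpret VT: vectorspace class_ring "VS.vs T" using VS.subspace_is_vs[OF subT] .
  have GT: "G \<subseteq> T" unfolding T_def by (rule VS.in_own_span[OF GV])
  have ST: "S \<subseteq> T"
  proof
    fix N assume "N \<in> S"
    then obtain x y z where N: "N = x \<cdot>\<^sub>m A1 + y \<cdot>\<^sub>m A2 + z \<cdot>\<^sub>m A3" using rep by blast
    have "A1 \<in> T" "A2 \<in> T" "A3 \<in> T" using GT unfolding G_def by auto
    hence "x \<odot>\<^bsub>?V\<^esub> A1 \<oplus>\<^bsub>?V\<^esub> y \<odot>\<^bsub>?V\<^esub> A2 \<oplus>\<^bsub>?V\<^esub> z \<odot>\<^bsub>?V\<^esub> A3 \<in> T"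
      using submT by (simp add: submodule.m_closed submodule.smult_closed class_ring_simps)
    thus "N \<in> T" unfolding N by (simp add: module_mat_simps)
  qed
  have genT: "VT.gen_set G"
    using VS.span_li_not_depend(1)[OF GT submT] unfolding T_def by simp
  have fdT: "VT.fin_dim" unfolding VT.fin_dim_def
    by (rule exI[of _ G]) (use genT GT in \<open>simp add: G_def\<close>)
  have "VT.dim \<le> card G" using VT.gen_ge_dim[of G] genT GT unfolding G_def by auto
  also have "card G \<le> 3" unfolding G_def by (simp add: card_insert_le_m1)
  finally have dT: "VT.dim \<le> 3" .
  have subS: "subspace class_ring S (VS.vs T)" using VS.nested_subspaces[OF subT sub ST] .
  have fdS: "vectorspace.fin_dim class_ring (VT.vs S)" using VT.fin_dim_subspace'[OF subS fdT] .
  have "vectorspace.dim class_ring (VT.vs S) \<le> VT.dim" using VT.subspace_dim[OF subS fdT fdS] .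
  thus ?thesis using dT by simp
qed


lemma mult_entry:
  assumes "A \<in> carrier_mat n m" "B \<in> carrier_mat m p" "i < n" "j < p"
  shows "(A*B)$$(i,j) = (\<Sum>k<m. A$$(i,k) * B$$(k,j))"
  using assms by (auto simp: scalar_prod_def lessThan_atLeast0 intro!: sum.cong)

lemma sum_two_delta:
  fixes f :: "nat \<Rightarrow> 'a::field"
  assumes "r < n" "s < n"
  shows "(\<Sum>k<n. (\<alpha> * (if k = r then 1 else 0) + \<beta> * (if k = s then 1 else 0)) * f k) = \<alpha> * f r + \<beta> * f s"
proof -
  have "(\<Sum>k<n. (\<alpha> * (if k = r then 1 else 0) + \<beta> * (if k = s then 1 else 0)) * f k)
     = (\<Sum>k<n. (if k = r then \<alpha> * f k else 0)) + (\<Sum>k<n. (if k = s then \<beta> * f k else 0))"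
    by (subst sum.distrib[symmetric]) (rule sum.cong, auto simp: algebra_simps)
  also have "\<dots> = \<alpha> * f r + \<beta> * f s" using assms by simp
  finally show ?thesis .
qed

lemma congr_case:
  fixes S :: "'a::field mat set" and u :: "nat \<Rightarrow> 'a"
  assumes carr: "S \<subseteq> carrier_mat n n"
  and r: "r < n" "u r \<noteq> 0"
  and rep: "\<forall>N\<in>S. \<exists>v. \<forall>k<n. \<forall>l<n. N$$(k,l) = u k * v l - u l * v k"
  shows "\<exists>W. W \<subseteq> WA_11 n \<and> congruent_sets n S W"
proof -
  define \<sigma> where "\<sigma> i = (if i = 0 then r else if i = r then 0 else i)" for i
  have \<sigma>n: "\<sigma> i < n" if "i < n" for i using that r unfolding \<sigma>_def by auto
  have \<sigma>inj: "\<sigma> i = \<sigma> j \<longleftrightarrow> i = j" for i j unfolding \<sigma>_def by auto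
  have \<sigma>r: "\<sigma> j = r \<longleftrightarrow> j = 0" for j unfolding \<sigma>_def by auto
  define P where "P = mat n n (\<lambda>(k,j). if j = 0 then u k else if k = \<sigma> j then 1 else 0)"
  define a where "a i = (if i = 0 then 1 / u r else - u (\<sigma> i) / u r)" for i
  define b where "b i = (if i = 0 then 0 else (1::'a))" for i :: nat
  define Q where "Q = mat n n (\<lambda>(i,k). a i * (if k = r then 1 else 0) + b i * (if k = \<sigma> i then 1 else 0))"
  have Pc: "P \<in> carrier_mat n n" and Qc: "Q \<in> carrier_mat n n" unfolding P_def Q_def by auto
  have Qsum: "(\<Sum>k<n. Q$$(i,k) * f k) = a i * f r + b i * f (\<sigma> i)" if "i < n" for i f
  proof -
    have "(\<Sum>k<n. Q$$(i,k) * f k) = (\<Sum>k<n. (a i * (if k = r then 1 else 0) + b i * (if k = \<sigma> i then 1 else 0)) * f k)"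
      using that unfolding Q_def by (intro sum.cong) auto
    also have "\<dots> = a i * f r + b i * f (\<sigma> i)" using sum_two_delta[OF r(1) \<sigma>n[OF that]] .
    finally show ?thesis .
  qed
  have QP: "Q * P = 1\<^sub>m n"
  proof (rule eq_matI)
    fix i j assume ij: "i < dim_row (1\<^sub>m n :: 'a mat)" "j < dim_col (1\<^sub>m n :: 'a mat)"
    hence i: "i < n" and j: "j < n" by auto
    have "(Q*P)$$(i,j) = (\<Sum>k<n. Q$$(i,k) * P$$(k,j))" using mult_entry[OF Qc Pc i j] .
    also have "\<dots> = a i * P$$(r,j) + b i * P$$(\<sigma> i,j)" using Qsum[OF i, of "\<lambda>k. P$$(k,j)"] .
    also have "\<dots> = (1\<^sub>m n :: 'a mat)$$(i,j)"
    proof -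
      have P1: "P$$(r,j) = (if j = 0 then u r else 0)" using j r unfolding P_def by (auto simp: \<sigma>_def)
      have P2: "P$$(\<sigma> i,j) = (if j = 0 then u (\<sigma> i) else if i = j then 1 else 0)"
        using i j \<sigma>n[OF i] \<sigma>inj unfolding P_def by auto
      show ?thesis unfolding P1 P2 using i j r(2) unfolding a_def b_def by auto
    qed
    finally show "(Q*P)$$(i,j) = (1\<^sub>m n :: 'a mat)$$(i,j)" .
  qed (use Qc Pc in auto)
  have PQ: "P * Q = 1\<^sub>m n" using mat_mult_left_right_inverse[OF Qc Pc QP] .
  have invP: "invertible_mat P"
    unfolding invertible_mat_def inverts_mat_def using PQ QP Pc Qc by auto
  have qu: "(\<Sum>k<n. Q$$(i,k) * u k) = (if i = 0 then 1 else 0)" if i: "i < n" for i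
  proof -
    have "(\<Sum>k<n. Q$$(i,k) * u k) = (\<Sum>k<n. Q$$(i,k) * P$$(k,0))"
      using r(1) unfolding P_def by (intro sum.cong) auto
    also have "\<dots> = (Q*P)$$(i,0)" using mult_entry[OF Qc Pc i] r(1) by simp
    also have "\<dots> = (if i = 0 then 1 else 0)" using QP i r(1) by simp
    finally show ?thesis .
  qed
  define W where "W = (\<lambda>N. Q * N * transpose_mat Q) ` S"
  have bck: "P * (Q * N * transpose_mat Q) * transpose_mat P = N" if N: "N \<in> carrier_mat n n" for N
  proof -
    have QT: "transpose_mat Q \<in> carrier_mat n n" using Qc by simp
    have PT: "transpose_mat P \<in> carrier_mat n n" using Pc by simp
    have "P * (Q * N * transpose_mat Q) * transpose_mat P = (P * Q) * N * (transpose_mat Q * transpose_mat P)"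
      using Pc Qc N QT PT by (simp add: assoc_mult_mat[of _ n n _ n _ n])
    also have "transpose_mat Q * transpose_mat P = transpose_mat (P * Q)"
      using transpose_mult[OF Pc Qc] by simp
    finally show ?thesis using PQ N by simp
  qed
  have SW: "S = (\<lambda>M. P * M * transpose_mat P) ` W"
  proof -
    have "(\<lambda>M. P * M * transpose_mat P) ` W = (\<lambda>N. P * (Q * N * transpose_mat Q) * transpose_mat P) ` S"
      unfolding W_def image_image ..
    also have "\<dots> = S" using bck carr by (auto simp: image_iff) (metis subsetD)
    finally show ?thesis by simp
  qed
  have WA: "W \<subseteq> WA_11 n"
  proof
    fix B assume "B \<in> W"
    then obtain N where N: "N \<in> S" and B: "B = Q * N * transpose_mat Q" unfolding W_def by blast
    obtain v where v: "\<forall>k<n. \<forall>l<n. N$$(k,l) = u k * v l - u l * v k" using rep N by blast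
    have Nc: "N \<in> carrier_mat n n" using N carr by auto
    define w where "w i = (\<Sum>k<n. Q$$(i,k) * v k)" for i
    define d where "d i = (if i = 0 then 1 else (0::'a))" for i :: nat
    have QN: "(Q*N)$$(i,l) = d i * v l - u l * w i" if "i < n" "l < n" for i l
    proof -
      have "(Q*N)$$(i,l) = (\<Sum>k<n. Q$$(i,k) * N$$(k,l))" using mult_entry[OF Qc Nc that] .
      also have "\<dots> = (\<Sum>k<n. (Q$$(i,k) * u k) * v l - u l * (Q$$(i,k) * v k))"
        using that by (intro sum.cong refl) (simp add: v algebra_simps)
      also have "\<dots> = (\<Sum>k<n. Q$$(i,k) * u k) * v l - u l * w i"
        unfolding w_def by (simp add: sum_subtractf sum_distrib_left sum_distrib_right)
      finally show ?thesis using qu[OF that(1)] unfolding d_def by simp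
    qed
    have QNc: "Q * N \<in> carrier_mat n n" using Qc Nc by simp
    have Be: "B$$(i,j) = d i * w j - w i * d j" if "i < n" "j < n" for i j
    proof -
      have "B$$(i,j) = (\<Sum>l<n. (Q*N)$$(i,l) * (transpose_mat Q)$$(l,j))"
        unfolding B using mult_entry[OF QNc _ that, of "transpose_mat Q"] Qc by simp
      also have "\<dots> = (\<Sum>l<n. d i * (Q$$(j,l) * v l) - w i * (Q$$(j,l) * u l))"
        using that Qc by (intro sum.cong refl) (simp add: QN algebra_simps)
      also have "\<dots> = d i * w j - w i * (\<Sum>l<n. Q$$(j,l) * u l)"
        unfolding w_def by (simp add: sum_subtractf sum_distrib_left)
      finally show ?thesis using qu[OF that(2)] unfolding d_def by simp
    qed
    have Bc: "B \<in> carrier_mat n n" unfolding B using Qc Nc by simp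
    show "B \<in> WA_11 n"
      unfolding WA_11_def alt_mats_def using Bc Be unfolding d_def by auto
  qed
  show ?thesis unfolding congruent_sets_def using WA SW invP Pc by blast
qed

theorem proposition1p5:
  fixes n :: nat and S :: "'a::field mat set"
  assumes "n > 0"
    and "S \<subseteq> alt_mats n"
    and "subspace class_ring S (module_mat TYPE('a) n n)"
    and "vectorspace.dim class_ring ((module_mat TYPE('a) n n)\<lparr>carrier := S\<rparr>) > 3"
    and "\<forall>M \<in> S. vec_space.rank n M \<le> 2"
  shows "\<exists>W. W \<subseteq> WA_11 n \<and> congruent_sets n S W"
proof -
  have carr: "S \<subseteq> carrier_mat n n" using assms(2) unfolding alt_mats_def by auto
  have skew: "\<And>A i j. A\<in>S \<Longrightarrow> i<n \<Longrightarrow> j<n \<Longrightarrow> A$$(i,j) = - A$$(j,i)"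
    using assms(2) unfolding alt_mats_def by auto
  have diag: "\<And>A i. A\<in>S \<Longrightarrow> i<n \<Longrightarrow> A$$(i,i) = 0"
    using assms(2) unfolding alt_mats_def by auto
  have subm: "submodule class_ring S (module_mat TYPE('a) n n)" using assms(3) by (simp add: subspace_def)
  have addc: "\<And>A B. A\<in>S \<Longrightarrow> B\<in>S \<Longrightarrow> A + B \<in> S"
    using submodule.m_closed[OF subm] by (simp add: module_mat_simps)
  have smul: "\<And>A c. A\<in>S \<Longrightarrow> c \<cdot>\<^sub>m A \<in> S"
    using submodule.smult_closed[OF subm] by (simp add: module_mat_simps class_ring_simps)
  have pl: "\<And>A i j k l. A\<in>S \<Longrightarrow> i<n \<Longrightarrow> j<n \<Longrightarrow> k<n \<Longrightarrow> l<n \<Longrightarrow>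
     A$$(i,j)*A$$(k,l) - A$$(i,k)*A$$(j,l) + A$$(i,l)*A$$(j,k) = 0"
  proof -
    fix A i j k l assume A: "A \<in> S" and ijkl: "i<n" "j<n" "k<n" "l<n"
    show "A$$(i,j)*A$$(k,l) - A$$(i,k)*A$$(j,l) + A$$(i,l)*A$$(j,k) = 0"
      using rank2_plucker[of A n, OF _ _ skew[OF A] diag[OF A] ijkl] A carr assms(5) by auto
  qed
  from alg_main[OF assms(1) carr addc smul skew diag pl] show ?thesis
  proof
    assume "\<exists>u. (\<exists>r<n. u r \<noteq> 0) \<and> (\<forall>N\<in>S. \<exists>v. \<forall>k<n. \<forall>l<n. N$$(k,l) = u k * v l - u l * v k)"
    then obtain u r where "r < n" "u r \<noteq> 0" "\<forall>N\<in>S. \<exists>v. \<forall>k<n. \<forall>l<n. N$$(k,l) = u k * v l - u l * v k"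
      by blast
    thus ?thesis using congr_case[OF carr] by blast
  next
    assume "\<exists>A1 A2 A3. A1 \<in> carrier_mat n n \<and> A2 \<in> carrier_mat n n \<and> A3 \<in> carrier_mat n n \<and>
          (\<forall>N\<in>S. \<exists>x y z. N = x \<cdot>\<^sub>m A1 + y \<cdot>\<^sub>m A2 + z \<cdot>\<^sub>m A3)"
    then obtain A1 A2 A3 where "A1 \<in> carrier_mat n n" "A2 \<in> carrier_mat n n" "A3 \<in> carrier_mat n n"
          "\<forall>N\<in>S. \<exists>x y z. N = x \<cdot>\<^sub>m A1 + y \<cdot>\<^sub>m A2 + z \<cdot>\<^sub>m A3" by blast
    from dim_le3[OF assms(3) this] assms(4) show ?thesis by simp
  qed
qed

end
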